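(* Let $p=\sum_{i=0}^n c_iT^i$ be a polynomial of degree $n\ge1$ over $\mathbb T$, and let $a_1\le\dots\le a_n$ be the unique elements of $\mathbb T$ with $c_n^{-1}p\in\boxdot_{i=1}^n(T+a_i)$. Let $a\ne0$ be one of the $a_i$, and let $k\in\{1,\dots,n\}$ and $m\ge1$ be such that $a=a_k=\dots=a_{k+m-1}$, $a_{k-1}<a_k$ if $k\ge2$, and $a_{k+m-1}<a_{k+m}$ if $k+m\le n$. Define $d_0,\dots,d_{n-1}\in\mathbb T$ by: (1) if $k\le n-m$: $d_{n-1}=c_n$ and, for $i=n-2,n-3,\dots,k+m-1$ (in decreasing order), $d_i=\max\{c_{i+1},ad_{i+1}\}$; (2) if $k\ge2$: $d_0=a^{-1}c_0$ and, for $i=1,\dots,k-2$ (in increasing order), $d_i=\max\{a^{-1}c_i,a^{-1}d_{i-1}\}$; (3) for $i=k-1,\dots,k+m-2$: $d_i=a_{i+2}a_{i+3}\cdots a_nc_n$ (an empty product being $1$). Then $q=\sum_{i=0}^{n-1}d_iT^i$ satisfies $p\in(T+a)\boxdot q$, i.e. $c_n=d_{n-1}$, $c_0=ad_0$, and $c_i\in (ad_i)\boxplus d_{i-1}$ for $i=1,\dots,n-1$.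
   Context: The tropical hyperfield $\mathbb T$ is $\mathbb R_{\ge0}$ with usual multiplication and hyperaddition $a\boxplus b=\{\max\{a,b\}\}$ if $a\ne b$, $a\boxplus a=[0,a]$ (so $c\in a\boxplus b$ iff the maximum of $a,b,c$ is attained at least twice; $-a=a$). Iterated sums: $\boxplus_{i=1}^n a_i=\bigcup_{b\in\boxplus_{i=1}^{n-1}a_i} b\boxplus a_n$. A polynomial over $\mathbb T$ is a finitely supported sequence $(c_i)$, written $\sum c_iT^i$. Hyperproduct: $p\boxdot q=\{\sum e_iT^i : e_i\in \boxplus_{k+l=i} c_kd_l\}$, and $\boxdot_{i=1}^n q_i=\bigcup_{r\in\boxdot_{i=1}^{n-1}q_i} r\boxdot q_n$. Known fact (fundamental theorem for $\mathbb T$): for monic $p$ of degree $n$ there is a unique sequence $a_1\le\dots\le a_n$ in $\mathbb T$ with $p\in\boxdot_{i=1}^n(T+a_i)$; this holds iff $c_i\le a_{i+1}\cdots a_n$ for all $i=0,\dots,n-1$ with equality whenever $a_i<a_{i+1}$ (for $i\ge1$) or $i=0$ and $a_0$ is not defined—precisely: $c_0=a_1\cdots a_n$ and $c_i=a_{i+1}\cdots a_n$ when $a_i<a_{i+1}$; the roots of $p$ are exactly $a_1,\dots,a_n$. *)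

theory Defs
  imports Main "HOL.Real"
begin

text \<open>Tropical hyperfield T: elements are reals \<ge> 0 (nonnegativity imposed by hypotheses).
  Hyperaddition a \<boxplus> b.\<close>
definition tplus :: "real \<Rightarrow> real \<Rightarrow> real set" where
  "tplus x y = (if x \<noteq> y then {max x y} else {0..x})"

text \<open>Iterated hypersum of a list (left to right); the empty sum is {0}
  (so 0 \<boxplus> a1 = {a1} and the iteration agrees with the paper's).\<close>
definition tsumL :: "real list \<Rightarrow> real set" where
  "tsumL xs = foldl (\<lambda>S x. \<Union>b\<in>S. tplus b x) {0} xs"

text \<open>Polynomials over T are coefficient sequences nat \<Rightarrow> real (finitely supported).
  Hyperproduct of two polynomials.\<close>
definition hmul :: "(nat \<Rightarrow> real) \<Rightarrow> (nat \<Rightarrow> real) \<Rightarrow> (nat \<Rightarrow> real) set" where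
  "hmul p q = {e. \<forall>i. e i \<in> tsumL (map (\<lambda>k. p k * q (i - k)) [0..<Suc i])}"

definition tone :: "nat \<Rightarrow> real" where
  "tone i = (if i = 0 then 1 else 0)"

text \<open>Iterated hyperproduct of a list of polynomials (starting from the constant 1,
  for which 1 \<boxdot> q = {q}).\<close>
definition hprodL :: "(nat \<Rightarrow> real) list \<Rightarrow> (nat \<Rightarrow> real) set" where
  "hprodL qs = foldl (\<lambda>S q. \<Union>r\<in>S. hmul r q) {tone} qs"

definition linp :: "real \<Rightarrow> nat \<Rightarrow> real" where
  "linp x i = (if i = 0 then x else if i = 1 then 1 else 0)"

end

theory Submission imports Defs begin

abbreviation FF where "FF \<equiv> (\<lambda>S x. \<Union>b\<in>S. tplus b x)"

lemma tplus_ne: "u \<noteq> v \<Longrightarrow> s \<in> tplus u v \<longleftrightarrow> s = max u v"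
  by (auto simp: tplus_def)
lemma tplus_eq: "s \<in> tplus u u \<longleftrightarrow> 0 \<le> s \<and> s \<le> u"
  by (auto simp: tplus_def)
lemma tplus_nonneg: "0 \<le> b \<Longrightarrow> s \<in> tplus b x \<Longrightarrow> 0 \<le> s"
  by (auto simp: tplus_def split: if_splits)
lemma tplus_le: "0 \<le> u \<Longrightarrow> s \<in> tplus u v \<Longrightarrow> s \<le> max u v"
  by (auto simp: tplus_def split: if_splits)
lemma tplus_0: "0 \<le> x \<Longrightarrow> tplus 0 x = {x}"
  by (auto simp: tplus_def)
lemma tplus_r0: "0 \<le> x \<Longrightarrow> tplus x 0 = {x}"
  by (auto simp: tplus_def)

lemma FF_zeros: "\<forall>x\<in>set ys. x = 0 \<Longrightarrow> \<forall>s\<in>S. s \<ge> 0 \<Longrightarrow> foldl FF S ys = S"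
proof (induction ys arbitrary: S)
  case Nil then show ?case by simp
next
  case (Cons y ys)
  have "FF S y = S" using Cons.prems by (auto simp: tplus_r0)
  then show ?case using Cons by simp
qed

lemma tsum_lin:
  assumes "1 \<le> i" "0 \<le> av * d i" "0 \<le> d (i - 1)" "0 \<le> av"
  shows "tsumL (map (\<lambda>k. linp av k * d (i - k)) [0..<Suc i]) = tplus (av * d i) (d (i - 1))"
proof -
  have u: "[0..<Suc i] = 0 # 1 # [Suc (Suc 0)..<Suc i]" using assms(1)
    by (simp add: upt_conv_Cons)
  have z: "\<forall>x\<in>set (map (\<lambda>k. linp av k * d (i - k)) [Suc (Suc 0)..<Suc i]). x = 0"
    by (auto simp: linp_def)
  have nn: "\<forall>s\<in>tplus (av * d i) (d (i - 1)). s \<ge> 0" using assms tplus_nonneg by blast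
  have s1: "FF {0} (linp av 0 * d (i - 0)) = {av * d i}"
    using assms by (simp add: linp_def tplus_0)
  have s2: "FF {av * d i} (linp av 1 * d (i - 1)) = tplus (av * d i) (d (i - 1))"
    by (simp add: linp_def)
  show ?thesis unfolding tsumL_def u list.map foldl_Cons s1 s2
    by (rule FF_zeros[OF z nn])
qed

lemma tsum_lin0:
  assumes "0 \<le> av * d 0"
  shows "tsumL (map (\<lambda>k. linp av k * d (0 - k)) [0..<Suc 0]) = {av * d 0}"
  using assms by (simp add: tsumL_def linp_def tplus_0)

lemma tsum_prod:
  assumes "1 \<le> i" "\<forall>i. 0 \<le> e i" "0 \<le> x"
  shows "tsumL (map (\<lambda>k. e k * linp x (i - k)) [0..<Suc i]) = tplus (e (i - 1)) (e i * x)"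
proof -
  obtain m where im: "i = Suc m" using assms(1) by (cases i) auto
  have u: "[0..<Suc i] = [0..<i-1] @ [i-1, i]" unfolding im by simp
  have z: "\<forall>x\<in>set (map (\<lambda>k. e k * linp x (i - k)) [0..<i-1]). x = 0"
    by (auto simp: linp_def)
  have "foldl FF {0} (map (\<lambda>k. e k * linp x (i - k)) [0..<i-1]) = {0}"
    using FF_zeros[OF z] by simp
  moreover have "i - (i - 1) = 1" using assms(1) by simp
  moreover have "FF {0} (e (i - 1) * linp x 1) = {e (i - 1)}"
    using assms by (simp add: linp_def tplus_0)
  moreover have "FF {e (i - 1)} (e i * linp x 0) = tplus (e (i - 1)) (e i * x)"
    by (simp add: linp_def)
  ultimately show ?thesis unfolding tsumL_def u list.map foldl_append foldl_Cons foldl_Nil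
    by simp
qed

lemma tsum_prod0:
  assumes "0 \<le> e 0 * x"
  shows "tsumL (map (\<lambda>k. e k * linp x (0 - k)) [0..<Suc 0]) = {e 0 * x}"
  using assms by (simp add: tsumL_def linp_def tplus_0)

lemma hprodL_snoc: "hprodL (xs @ [q]) = (\<Union>r\<in>hprodL xs. hmul r q)"
  by (simp add: hprodL_def)

lemma fund:
  assumes an: "\<forall>i\<in>{1..n}. a i \<ge> (0::real)"
    and am: "\<forall>i j. 1 \<le> i \<longrightarrow> i \<le> j \<longrightarrow> j \<le> n \<longrightarrow> a i \<le> a j"
  shows "j \<le> n \<Longrightarrow> e \<in> hprodL (map (\<lambda>i. linp (a i)) [1..<Suc j]) \<Longrightarrow>
    (\<forall>i. e i \<ge> 0) \<and> (\<forall>i>j. e i = 0) \<and> e j = 1 \<and> (\<forall>i\<le>j. e i \<le> prod a {i+1..j})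
    \<and> e 0 = prod a {1..j} \<and> (\<forall>i. 1 \<le> i \<and> i < j \<and> a i < a (i+1) \<longrightarrow> e i = prod a {i+1..j})"
proof (induction j arbitrary: e)
  case 0
  then show ?case by (simp add: hprodL_def tone_def)
next
  case (Suc j f)
  define x where "x = a (Suc j)"
  have "f \<in> hprodL (map (\<lambda>i. linp (a i)) [1..<Suc j] @ [linp x])"
    using Suc.prems(2) by (simp add: x_def)
  then obtain e where e: "e \<in> hprodL (map (\<lambda>i. linp (a i)) [1..<Suc j])" and f: "f \<in> hmul e (linp x)"
    unfolding hprodL_snoc by blast
  have IH: "(\<forall>i. e i \<ge> 0) \<and> (\<forall>i>j. e i = 0) \<and> e j = 1 \<and> (\<forall>i\<le>j. e i \<le> prod a {i+1..j})
    \<and> e 0 = prod a {1..j} \<and> (\<forall>i. 1 \<le> i \<and> i < j \<and> a i < a (i+1) \<longrightarrow> e i = prod a {i+1..j})"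
  proof -
    have "j \<le> n" using Suc.prems(1) by simp
    from Suc.IH[OF this e] show ?thesis .
  qed
  have E1: "\<forall>i. e i \<ge> 0" using IH by blast
  have E4: "\<forall>i\<le>j. e i \<le> prod a {i+1..j}" using IH by blast
  have E2: "\<forall>i>j. e i = 0" using IH by blast
  have E3: "e j = 1" using IH by blast
  have E5: "e 0 = prod a {1..j}" using IH by blast
  have E6: "\<forall>i. 1 \<le> i \<and> i < j \<and> a i < a (i+1) \<longrightarrow> e i = prod a {i+1..j}" using IH by blast
  have x0: "x \<ge> 0" using an[rule_format, of "Suc j"] Suc.prems(1) by (simp add: x_def)
  have ax: "\<And>i. 1 \<le> i \<Longrightarrow> i \<le> Suc j \<Longrightarrow> a i \<le> x"
    unfolding x_def using am Suc.prems(1) by simp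
  have pnn: "\<And>l. 1 \<le> l \<Longrightarrow> 0 \<le> prod a {l..j}"
    using an Suc.prems(1) by (intro prod_nonneg) auto
  have fall: "\<And>i. f i \<in> tsumL (map (\<lambda>k. e k * linp x (i - k)) [0..<Suc i])"
    using f unfolding hmul_def by blast
  have f0: "f 0 = e 0 * x"
  proof -
    have "0 \<le> e 0" using IH by blast
    then have "0 \<le> e 0 * x" using x0 by simp
    then show ?thesis using fall[of 0] tsum_prod0[of e x] by simp
  qed
  have fi: "\<And>i. 1 \<le> i \<Longrightarrow> f i \<in> tplus (e (i - 1)) (e i * x)"
  proof -
    fix i :: nat assume "1 \<le> i"
    then show "f i \<in> tplus (e (i - 1)) (e i * x)"
      using fall[of i] tsum_prod[of i e x] E1 x0 by simp
  qed
  have fnn: "\<forall>i. f i \<ge> 0"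
  proof
    fix i show "f i \<ge> 0"
    proof (cases "i = 0")
      case True then show ?thesis using f0 E1 x0 by (metis mult_nonneg_nonneg)
    next
      case False then show ?thesis using tplus_nonneg[OF E1[rule_format] fi[of i]] by simp
    qed
  qed
  have fhi: "\<forall>i>Suc j. f i = 0"
  proof (intro allI impI)
    fix i assume "i > Suc j"
    then have "e (i - 1) = 0" "e i = 0" using E2 by auto
    then show "f i = 0" using fi[of i] \<open>i > Suc j\<close> by (simp add: tplus_def)
  qed
  have ftop: "f (Suc j) = 1"
    using fi[of "Suc j"] E2 E3 by (simp add: tplus_def)
  have f0p: "f 0 = prod a {1..Suc j}"
    using f0 E5 by (simp add: prod.cl_ivl_Suc x_def)
  have fle: "\<forall>i\<le>Suc j. f i \<le> prod a {i+1..Suc j}"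
  proof (intro allI impI)
    fix i assume i: "i \<le> Suc j"
    show "f i \<le> prod a {i+1..Suc j}"
    proof (cases "i = 0")
      case True then show ?thesis using f0p by simp
    next
      case False
      show ?thesis
      proof (cases "i = Suc j")
        case True then show ?thesis using ftop by simp
      next
        case False
        with i \<open>i \<noteq> 0\<close> have i1: "1 \<le> i" "i \<le> j" by linarith+
        have P: "prod a {i+1..Suc j} = x * prod a {i+1..j}"
          using i1 by (simp add: prod.cl_ivl_Suc x_def)
        have Q: "prod a {i - 1 + 1..j} = a i * prod a {i+1..j}"
          using i1 prod.atLeast_Suc_atMost[of i j a] by simp
        have "e (i - 1) \<le> prod a {i - 1 + 1..j}" by (rule E4[rule_format]) (use i1 in arith)
        then have "e (i - 1) \<le> a i * prod a {i+1..j}" unfolding Q .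
        also have "\<dots> \<le> x * prod a {i+1..j}"
          by (rule mult_right_mono[OF ax[OF i1(1)] pnn]) (use i1 in arith)+
        finally have A: "e (i - 1) \<le> prod a {i+1..Suc j}" unfolding P .
        have "e i \<le> prod a {i+1..j}" using E4 i1 by blast
        then have "x * e i \<le> x * prod a {i+1..j}" using x0 by (rule mult_left_mono)
        then have B: "e i * x \<le> prod a {i+1..Suc j}" unfolding P by (simp only: mult.commute)
        have "f i \<le> max (e (i - 1)) (e i * x)" using tplus_le[OF _ fi[OF i1(1)]] E1 by blast
        then show ?thesis using max.boundedI[OF A B] by (rule order.trans)
      qed
    qed
  qed
  have feq: "\<forall>i. 1 \<le> i \<and> i < Suc j \<and> a i < a (i+1) \<longrightarrow> f i = prod a {i+1..Suc j}"
  proof (intro allI impI)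
    fix i assume h: "1 \<le> i \<and> i < Suc j \<and> a i < a (i+1)"
    have P: "prod a {i+1..Suc j} = x * prod a {i+1..j}"
      using h by (simp add: prod.cl_ivl_Suc x_def)
    have Q: "prod a {i - 1 + 1..j} = a i * prod a {i+1..j}"
      using h prod.atLeast_Suc_atMost[of i j a] by simp
    have ei: "e i = prod a {i+1..j}"
    proof (cases "i = j")
      case True then show ?thesis using E3 by simp
    next
      case False then show ?thesis using E6[rule_format, of i] h by linarith
    qed
    have pos: "0 < prod a {i+1..j}"
    proof (rule prod_pos)
      fix l assume l: "l \<in> {i+1..j}"
      have "0 \<le> a i" using an[rule_format, of i] h Suc.prems(1) by simp
      also have "a i < a (i+1)" using h by simp
      also have "a (i+1) \<le> a l" using am[rule_format, of "i+1" l] l Suc.prems(1) by simp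
      finally show "0 < a l" .
    qed
    have xi: "a i < x" using h ax[of "i+1"] by linarith
    have "e (i - 1) \<le> prod a {i - 1 + 1..j}" by (rule E4[rule_format]) (use h in arith)
    then have "e (i - 1) \<le> a i * prod a {i+1..j}" using Q by simp
    also have "\<dots> < x * prod a {i+1..j}" using xi pos by (rule mult_strict_right_mono)
    finally have "e (i - 1) < e i * x" unfolding ei by (simp only: mult.commute)
    then have "f i = e i * x" using fi[of i] h by (simp add: tplus_def)
    then show "f i = prod a {i+1..Suc j}" using P ei by (simp add: mult.commute)
  qed
  show ?case by (intro conjI; fact)
qed


lemma tp_left: "0 \<le> c \<Longrightarrow> 0 \<le> y \<Longrightarrow> c \<in> tplus (max c y) y"
  by (auto simp: tplus_def max_def)
lemma tp_right: "0 \<le> c \<Longrightarrow> 0 \<le> x \<Longrightarrow> c \<in> tplus x (max c x)"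
  by (auto simp: tplus_def max_def)
lemma tp_ge: "0 \<le> y \<Longrightarrow> y \<le> x \<Longrightarrow> x \<in> tplus x y"
  by (auto simp: tplus_def max_def)
lemma tp_lt: "0 \<le> x \<Longrightarrow> x < y \<Longrightarrow> y \<in> tplus x y"
  by (auto simp: tplus_def max_def)

lemma aux_mono: "0 \<le> (cc::real) \<Longrightarrow> 0 \<le> p \<Longrightarrow> x \<le> y \<Longrightarrow> cc * (x * p) \<le> y * (cc * p)"
proof -
  assume h: "0 \<le> cc" "0 \<le> p" "x \<le> y"
  have "x * (cc * p) \<le> y * (cc * p)" using h by (intro mult_right_mono) auto
  then show ?thesis by (simp add: mult.left_commute)
qed

lemma max_div: "(A::real) > 0 \<Longrightarrow> A * max (x / A) (y / A) = max x y"
  by (cases "x \<le> y") (auto simp: max_def divide_le_cancel)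

theorem mainTheorem6:
  fixes n k m :: nat and c d a :: "nat \<Rightarrow> real" and av :: real
  assumes n_ge: "n \<ge> 1"
    and c_nonneg: "\<forall>i. c i \<ge> 0"
    and c_supp: "\<forall>i>n. c i = 0"
    and c_lead: "c n \<noteq> 0"
    and a_nonneg: "\<forall>i\<in>{1..n}. a i \<ge> 0"
    and a_mono: "\<forall>i j. 1 \<le> i \<longrightarrow> i \<le> j \<longrightarrow> j \<le> n \<longrightarrow> a i \<le> a j"
    and fact: "(\<lambda>i. c i / c n) \<in> hprodL (map (\<lambda>i. linp (a i)) [1..<Suc n])"
    and av_nz: "av \<noteq> 0"
    and k_range: "1 \<le> k" "k \<le> n"
    and m_ge: "m \<ge> 1"
    and km: "k + m - 1 \<le> n"
    and block: "\<forall>i. k \<le> i \<and> i \<le> k + m - 1 \<longrightarrow> a i = av"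
    and left_strict: "k \<ge> 2 \<longrightarrow> a (k - 1) < a k"
    and right_strict: "k + m \<le> n \<longrightarrow> a (k + m - 1) < a (k + m)"
    and d1: "k \<le> n - m \<longrightarrow> d (n - 1) = c n \<and>
              (\<forall>i. k + m - 1 \<le> i \<and> i \<le> n - 2 \<longrightarrow> d i = max (c (i + 1)) (av * d (i + 1)))"
    and d2: "k \<ge> 2 \<longrightarrow> d 0 = c 0 / av \<and>
              (\<forall>i. 1 \<le> i \<and> i \<le> k - 2 \<longrightarrow> d i = max (c i / av) (d (i - 1) / av))"
    and d3: "\<forall>i. k - 1 \<le> i \<and> i \<le> k + m - 2 \<longrightarrow> d i = (\<Prod>j\<in>{i+2..n}. a j) * c n"
    and d_supp: "\<forall>i\<ge>n. d i = 0"
  shows "c \<in> hmul (linp av) d \<and>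
         c n = d (n - 1) \<and> c 0 = av * d 0 \<and>
         (\<forall>i. 1 \<le> i \<and> i \<le> n - 1 \<longrightarrow> c i \<in> tplus (av * d i) (d (i - 1)))"
proof -
  define P where "P = (\<lambda>i. prod a {Suc i..n})"
  define A where "A = av"
  have cn: "c n > 0" using c_nonneg c_lead by (metis less_eq_real_def)
  have avk: "a k = av" using block m_ge by simp
  have A0: "A > 0" using a_nonneg k_range avk av_nz unfolding A_def
    by (metis atLeastAtMost_iff less_eq_real_def)
  have PS: "\<And>i. i < n \<Longrightarrow> P i = a (Suc i) * P (Suc i)"
    unfolding P_def using prod.atLeast_Suc_atMost by (metis Suc_leI)
  have Pn: "P n = 1" unfolding P_def by simp
  have Pnn: "\<And>i. P i \<ge> 0" unfolding P_def using a_nonneg by (intro prod_nonneg) auto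
  have aA: "\<And>l. k \<le> l \<Longrightarrow> l \<le> n \<Longrightarrow> A \<le> a l"
    unfolding A_def using a_mono k_range avk by auto
  have aA': "\<And>l. 1 \<le> l \<Longrightarrow> l \<le> k \<Longrightarrow> a l \<le> A"
    unfolding A_def using a_mono k_range avk by auto
  have Ppos: "\<And>i. k \<le> Suc i \<Longrightarrow> P i > 0"
    unfolding P_def
  proof (rule prod_pos)
    fix i l assume "k \<le> Suc i" "l \<in> {Suc i..n}"
    then show "0 < a l" using aA[of l] A0 by auto
  qed
  have F: "(\<forall>i. c i / c n \<ge> 0) \<and> (\<forall>i>n. c i / c n = 0) \<and> c n / c n = 1
      \<and> (\<forall>i\<le>n. c i / c n \<le> prod a {i+1..n}) \<and> c 0 / c n = prod a {1..n}
      \<and> (\<forall>i. 1 \<le> i \<and> i < n \<and> a i < a (i+1) \<longrightarrow> c i / c n = prod a {i+1..n})"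
    using fund[OF a_nonneg a_mono _ fact] by simp
  have G1: "\<And>i. i \<le> n \<Longrightarrow> c i \<le> c n * P i"
  proof -
    fix i assume "i \<le> n"
    then have "c i / c n \<le> P i" using F unfolding P_def by simp
    then show "c i \<le> c n * P i" using cn by (simp add: pos_divide_le_eq mult.commute)
  qed
  have G2: "c 0 = c n * P 0"
  proof -
    have "c 0 / c n = P 0" using F unfolding P_def by simp
    then show ?thesis using cn by (simp add: divide_eq_eq mult.commute)
  qed
  have G3: "\<And>i. 1 \<le> i \<Longrightarrow> i < n \<Longrightarrow> a i < a (Suc i) \<Longrightarrow> c i = c n * P i"
  proof -
    fix i assume "1 \<le> i" "i < n" "a i < a (Suc i)"
    then have "c i / c n = P i" using F unfolding P_def by simp
    then show "c i = c n * P i" using cn by (simp add: divide_eq_eq mult.commute)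
  qed
  have D3: "\<And>i. k - 1 \<le> i \<Longrightarrow> i \<le> k + m - 2 \<Longrightarrow> d i = c n * P (Suc i)"
  proof -
    fix i assume "k - 1 \<le> i" "i \<le> k + m - 2"
    then have "d i = (\<Prod>j\<in>{i+2..n}. a j) * c n" using d3 by blast
    moreover have "{i+2..n} = {Suc (Suc i)..n}" by simp
    ultimately show "d i = c n * P (Suc i)" unfolding P_def by (simp add: mult.commute)
  qed
  have Lbound: "k \<ge> 2 \<Longrightarrow> \<forall>i. i \<le> k - 2 \<longrightarrow> A * d i \<le> c n * P i"
  proof -
    assume k2: "k \<ge> 2"
    have d0: "d 0 = c 0 / av" using d2 k2 by blast
    have d2i: "\<And>i. 1 \<le> i \<Longrightarrow> i \<le> k - 2 \<Longrightarrow> d i = max (c i / A) (d (i - 1) / A)"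
      using d2 k2 unfolding A_def by blast
    show ?thesis
    proof (intro allI)
      fix i show "i \<le> k - 2 \<longrightarrow> A * d i \<le> c n * P i"
      proof (induction i)
        case 0
        have "A * d 0 = c 0" using d0 A0 unfolding A_def by simp
        then show ?case using G1[of 0] by simp
      next
        case (Suc i)
        show ?case
        proof
          assume h: "Suc i \<le> k - 2"
          have IH: "A * d i \<le> c n * P i" using Suc.IH h by simp
          have Pi: "P i = a (Suc i) * P (Suc i)" using PS[of i] h k_range by simp
          have "c n * P i \<le> A * (c n * P (Suc i))"
            unfolding Pi using aA'[of "Suc i"] h cn Pnn[of "Suc i"]
            by (intro aux_mono) auto
          with IH have "A * d i \<le> A * (c n * P (Suc i))" by linarith
          then have di: "d i \<le> c n * P (Suc i)" using A0 by simp
          have "A * d (Suc i) = max (c (Suc i)) (d i)"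
            using d2i[of "Suc i"] h A0 max_div by simp
          then show "A * d (Suc i) \<le> c n * P (Suc i)"
            using di G1[of "Suc i"] h k_range by simp
        qed
      qed
    qed
  qed
  have Lstep: "\<And>j. 1 \<le> j \<Longrightarrow> j \<le> k \<Longrightarrow> A * d (j - 1) \<le> c n * P (j - 1) \<Longrightarrow> d (j - 1) \<le> c n * P j"
  proof -
    fix j assume h: "1 \<le> j" "j \<le> k" "A * d (j - 1) \<le> c n * P (j - 1)"
    have Pi: "P (j - 1) = a j * P j" using PS[of "j - 1"] h k_range by simp
    have "c n * P (j - 1) \<le> A * (c n * P j)"
      unfolding Pi using aA'[of j] h cn Pnn[of j]
      by (intro aux_mono) auto
    with h(3) have "A * d (j - 1) \<le> A * (c n * P j)" by linarith
    then show "d (j - 1) \<le> c n * P j" using A0 by simp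
  qed
  have Rbound: "k + m \<le> n \<Longrightarrow> \<forall>i. k + m - 1 \<le> i \<longrightarrow> i + t = n - 1 \<longrightarrow> d i \<le> c n * P (Suc i)" for t
  proof (induction t)
    case 0
    have "k \<le> n - m" using 0 by simp
    then have "d (n - 1) = c n" using d1 by blast
    then show ?case using Pn n_ge by auto
  next
    case (Suc t)
    show ?case
    proof (intro allI impI)
      fix i assume h: "k + m - 1 \<le> i" "i + Suc t = n - 1"
      have IH: "d (Suc i) \<le> c n * P (Suc (Suc i))" using Suc h by simp
      have "k \<le> n - m" using Suc.prems by simp
      then have di: "d i = max (c (i + 1)) (av * d (i + 1))" using d1 h by auto
      have Pi: "P (Suc i) = a (Suc (Suc i)) * P (Suc (Suc i))" using PS[of "Suc i"] h by simp
      have "A * d (Suc i) \<le> A * (c n * P (Suc (Suc i)))" using IH A0 by simp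
      also have "\<dots> \<le> c n * P (Suc i)"
      proof -
        have "A \<le> a (Suc (Suc i))" using aA[of "Suc (Suc i)"] h m_ge by simp
        then have "c n * (A * P (Suc (Suc i))) \<le> a (Suc (Suc i)) * (c n * P (Suc (Suc i)))"
          using cn Pnn[of "Suc (Suc i)"] by (intro aux_mono) auto
        then show ?thesis unfolding Pi by (simp add: mult.left_commute)
      qed
      finally have "A * d (Suc i) \<le> c n * P (Suc i)" .
      then show "d i \<le> c n * P (Suc i)" using di G1[of "Suc i"] h unfolding A_def by simp
    qed
  qed
  have avA: "av = A" by (simp add: A_def)
  have d2i: "\<And>i. k \<ge> 2 \<Longrightarrow> 1 \<le> i \<Longrightarrow> i \<le> k - 2 \<Longrightarrow> A * d i = max (c i) (d (i - 1))"
  proof -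
    fix i assume h: "k \<ge> 2" "1 \<le> i" "i \<le> k - 2"
    then have "d i = max (c i / A) (d (i - 1) / A)" using d2 unfolding A_def by blast
    then show "A * d i = max (c i) (d (i - 1))" using max_div A0 by simp
  qed
  have dnn: "\<And>i. d i \<ge> 0"
  proof -
    fix i
    show "d i \<ge> 0"
    proof (cases "n \<le> i")
      case True then show ?thesis using d_supp by simp
    next
      case nle: False
      show ?thesis
      proof (cases "k - 1 \<le> i \<and> i \<le> k + m - 2")
        case True then show ?thesis using D3[of i] cn Pnn[of "Suc i"] by simp
      next
        case False
        show ?thesis
        proof (cases "i < k - 1")
          case ilt: True
          then have k2: "k \<ge> 2" by simp
          show ?thesis
          proof (cases "i = 0")
            case True then show ?thesis using d2 k2 c_nonneg A0 unfolding A_def by simp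
          next
            case False
            then have "A * d i = max (c i) (d (i - 1))" using d2i[of i] k2 ilt by simp
            then have "A * d i \<ge> 0" using c_nonneg[rule_format, of i] by linarith
            then show ?thesis using A0 by (simp add: zero_le_mult_iff)
          qed
        next
          case False
          with \<open>\<not> (k - 1 \<le> i \<and> i \<le> k + m - 2)\<close> nle have h: "k + m - 1 \<le> i" "i < n" "k \<le> n - m" by auto
          show ?thesis
          proof (cases "i = n - 1")
            case True then show ?thesis using d1 h cn by simp
          next
            case False
            then have "d i = max (c (i + 1)) (av * d (i + 1))" using d1 h by auto
            then show ?thesis using c_nonneg[rule_format, of "i + 1"] by linarith
          qed
        qed
      qed
    qed
  qed
  have MAIN: "\<And>i. 1 \<le> i \<Longrightarrow> i \<le> n - 1 \<Longrightarrow> c i \<in> tplus (A * d i) (d (i - 1))"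
  proof -
    fix i assume i1: "1 \<le> i" and i2: "i \<le> n - 1"
    consider "i < k - 1" | "i = k - 1" | "k \<le> i \<and> i \<le> k + m - 2" | "i = k + m - 1" | "k + m \<le> i"
      by linarith
    then show "c i \<in> tplus (A * d i) (d (i - 1))"
    proof cases
      case 1
      then have "A * d i = max (c i) (d (i - 1))" using d2i[of i] i1 by simp
      then show ?thesis using tp_left[OF _ dnn] c_nonneg by simp
    next
      case 2
      then have k2: "k \<ge> 2" using i1 by simp
      have di: "d i = c n * P k" using D3[of i] 2 k2 m_ge by simp
      have Pk: "P (k - 1) = A * P k" using PS[of "k - 1"] k2 k_range avk A_def by simp
      have ci: "c i = c n * P (k - 1)"
        using G3[of "k - 1"] 2 k2 k_range left_strict i2 by simp
      have Adi: "A * d i = c i" using di ci Pk by simp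
      have LB: "A * d (k - 2) \<le> c n * P (k - 2)" using Lbound k2 by blast
      have "d (k - 1 - 1) \<le> c n * P (k - 1)"
        using Lstep[of "k - 1"] k2 LB by (simp add: numeral_2_eq_2)
      then have "d (i - 1) \<le> A * d i" using Adi ci 2 by simp
      then show ?thesis using tp_ge[OF dnn] Adi by simp
    next
      case 3
      have di: "d i = c n * P (Suc i)" by (rule D3) (use 3 in arith)+
      have di1: "d (i - 1) = c n * P i" using D3[of "i - 1"] 3 i1 k_range by (simp add: le_diff_conv)
      have "k \<le> Suc i \<and> Suc i \<le> k + m - 1" using 3 m_ge k_range by arith
      then have aSi: "a (Suc i) = A" using block A_def by blast
      have Pi: "P i = A * P (Suc i)" using PS[of i] aSi i2 n_ge by simp
      have eq: "A * d i = d (i - 1)" using di di1 Pi by simp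
      have "c i \<le> d (i - 1)" using G1[of i] di1 i2 by simp
      then show ?thesis using eq tplus_eq c_nonneg by simp
    next
      case 4
      then have kmn: "k + m \<le> n" using i2 n_ge m_ge by simp
      have e1: "k - 1 \<le> i - 1" "i - 1 \<le> k + m - 2" using 4 m_ge k_range by arith+
      have "Suc (i - 1) = i" using i1 by arith
      then have di1: "d (i - 1) = c n * P i" using D3[OF e1] by simp
      have aSi: "a (Suc i) = a (k + m)" using 4 k_range m_ge by (simp add: Suc_diff_le)
      have "k \<le> i \<and> i \<le> k + m - 1" using 4 m_ge by arith
      then have ai: "a i = A" using block A_def by blast
      have lt: "A < a (Suc i)" using right_strict kmn ai aSi 4 by simp
      have ci: "c i = c n * P i" using G3[of i] i1 i2 n_ge lt ai by simp
      have Pi: "P i = a (Suc i) * P (Suc i)" using PS[of i] i2 n_ge by simp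
      have RB: "d i \<le> c n * P (Suc i)" using Rbound[OF kmn, of "n - 1 - i"] 4 i2 by simp
      have "k \<le> Suc (Suc i)" using 4 by arith
      then have pos: "c n * P (Suc i) > 0" using cn Ppos[of "Suc i"] by simp
      have "A * d i \<le> A * (c n * P (Suc i))" using RB A0 by simp
      also have "\<dots> < a (Suc i) * (c n * P (Suc i))" using lt pos by (rule mult_strict_right_mono)
      also have "\<dots> = c i" using ci Pi by simp
      finally have "A * d i < c i" .
      moreover have "A * d i \<ge> 0" using A0 dnn[of i] by simp
      ultimately show ?thesis using tp_lt di1 ci by simp
    next
      case 5
      then have "k \<le> n - m" using i2 by simp
      then have D1: "\<forall>i. k + m - 1 \<le> i \<and> i \<le> n - 2 \<longrightarrow> d i = max (c (i + 1)) (av * d (i + 1))"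
        using d1 by blast
      have "k + m - 1 \<le> i - 1 \<and> i - 1 \<le> n - 2" using 5 i2 m_ge by arith
      then have "d (i - 1) = max (c (i - 1 + 1)) (av * d (i - 1 + 1))" using D1 by blast
      then have "d (i - 1) = max (c i) (A * d i)" using i1 avA by simp
      then show ?thesis using tp_right[OF _ ] c_nonneg dnn A0 by simp
    qed
  qed
  have c0: "c 0 = av * d 0"
  proof (cases "k \<ge> 2")
    case True then show ?thesis using d2 av_nz by simp
  next
    case False
    then have k1: "k = 1" using k_range by simp
    have "d 0 = c n * P 1" using D3[of 0] k1 m_ge by simp
    moreover have "P 0 = A * P 1" using PS[of 0] n_ge avk k1 A_def by simp
    ultimately show ?thesis using G2 avA by simp
  qed
  have cnd: "c n = d (n - 1)"
  proof (cases "k + m \<le> n")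
    case True then show ?thesis using d1 by simp
  next
    case False
    then have "d (n - 1) = c n * P n" using D3[of "n - 1"] k_range km n_ge by simp
    then show ?thesis using Pn by simp
  qed
  have hm: "c \<in> hmul (linp av) d"
    unfolding hmul_def
  proof (intro CollectI allI)
    fix i
    show "c i \<in> tsumL (map (\<lambda>k. linp av k * d (i - k)) [0..<Suc i])"
    proof (cases "i = 0")
      case True
      have "0 \<le> av * d 0" using avA A0 dnn[of 0] by simp
      then show ?thesis using tsum_lin0[of av d] True c0 by simp
    next
      case False
      then have i1: "1 \<le> i" by simp
      have T: "tsumL (map (\<lambda>k. linp av k * d (i - k)) [0..<Suc i]) = tplus (av * d i) (d (i - 1))"
        using tsum_lin[OF i1] avA A0 dnn by simp
      show ?thesis
      proof (cases "i \<le> n - 1")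
        case True then show ?thesis using T MAIN[OF i1] avA by simp
      next
        case False
        show ?thesis
        proof (cases "i = n")
          case True
          then show ?thesis using T d_supp cnd tplus_0[of "c n"] cn by simp
        next
          case False
          then have "i > n" using \<open>\<not> i \<le> n - 1\<close> by simp
          then show ?thesis using T d_supp c_supp by (simp add: tplus_def)
        qed
      qed
    qed
  qed
  show ?thesis using hm cnd c0 MAIN avA by simp
qed

end
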